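(* If $G$ is a uniformly dense (finite, simple) graph containing a cycle, then its girth satisfies $\operatorname{gir}(G)\ge\rho(G)/(\rho(G)-1)$.
   Context: For $A\subseteq E$, $c(A)$ is the number of components of $(V,A)$, $\operatorname{rank}(A)=|V|-c(A)$, $\rho(A)=|A|/\operatorname{rank}(A)$, $\rho(G)=\rho(E)$; $G$ is uniformly dense if $\rho(A)\le\rho(G)$ for all nonempty $A\subseteq E$. The girth $\operatorname{gir}(G)$ is the number of edges in a smallest cycle. *)

theory Defs
  imports Complex_Main
begin

definition simple_graph :: "'a set \<Rightarrow> 'a set set \<Rightarrow> bool" where
  "simple_graph V E \<longleftrightarrow> finite V \<and> (\<forall>e\<in>E. e \<subseteq> V \<and> card e = 2)"

definition adj :: "'a set set \<Rightarrow> 'a \<Rightarrow> 'a \<Rightarrow> bool" where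
  "adj A x y \<longleftrightarrow> {x, y} \<in> A"

definition components :: "'a set \<Rightarrow> 'a set set \<Rightarrow> 'a set set" where
  "components V A = {{y \<in> V. (adj A)\<^sup>*\<^sup>* x y} | x. x \<in> V}"

definition num_components :: "'a set \<Rightarrow> 'a set set \<Rightarrow> nat" where
  "num_components V A = card (components V A)"

definition graph_rank :: "'a set \<Rightarrow> 'a set set \<Rightarrow> nat" where
  "graph_rank V A = card V - num_components V A"

definition density :: "'a set \<Rightarrow> 'a set set \<Rightarrow> real" where
  "density V A = real (card A) / real (graph_rank V A)"

definition uniformly_dense :: "'a set \<Rightarrow> 'a set set \<Rightarrow> bool" where
  "uniformly_dense V E \<longleftrightarrow>
     (\<forall>A. A \<subseteq> E \<and> A \<noteq> {} \<longrightarrow> density V A \<le> density V E)"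

definition is_cycle :: "'a set \<Rightarrow> 'a set set \<Rightarrow> 'a list \<Rightarrow> bool" where
  "is_cycle V E vs \<longleftrightarrow> length vs \<ge> 3 \<and> distinct vs \<and> set vs \<subseteq> V \<and>
     (\<forall>i < length vs. {vs ! i, vs ! ((i + 1) mod length vs)} \<in> E)"

definition has_cycle :: "'a set \<Rightarrow> 'a set set \<Rightarrow> bool" where
  "has_cycle V E \<longleftrightarrow> (\<exists>vs. is_cycle V E vs)"

definition girth :: "'a set \<Rightarrow> 'a set set \<Rightarrow> nat" where
  "girth V E = (LEAST k. \<exists>vs. is_cycle V E vs \<and> length vs = k)"

end

theory Submission
  imports Defs
begin

lemma reach_in_S:
  assumes "\<And>x y. adj A x y \<Longrightarrow> x \<in> S \<and> y \<in> S"
    and "(adj A)\<^sup>*\<^sup>* x y"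
  shows "x = y \<or> (x \<in> S \<and> y \<in> S)"
  using assms(2)
proof (induction rule: rtranclp_induct)
  case base then show ?case by simp
next
  case (step y z) then show ?case using assms(1)[of y z] by auto
qed

lemma reach_sym:
  assumes "(adj A)\<^sup>*\<^sup>* x y"
  shows "(adj A)\<^sup>*\<^sup>* y x"
  using assms
proof (induction rule: rtranclp_induct)
  case base then show ?case by simp
next
  case (step y z)
  have "adj A z y" using step(2) by (simp add: adj_def insert_commute)
  then show ?case using step(3) by (meson converse_rtranclp_into_rtranclp)
qed

lemma cycle_facts:
  assumes fin: "finite V" and cyc: "is_cycle V E vs"
  defines "g \<equiv> length vs"
  defines "A \<equiv> (\<lambda>i. {vs!i, vs!((i+1) mod g)}) ` {..<g}"
  shows "A \<subseteq> E" "A \<noteq> {}" "card A = g" "graph_rank V A = g - 1"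
proof -
  have g3: "g \<ge> 3" and dist: "distinct vs" and SV: "set vs \<subseteq> V"
    and edges: "\<forall>i<g. {vs ! i, vs ! ((i + 1) mod g)} \<in> E"
    using cyc unfolding is_cycle_def g_def by auto
  show "A \<subseteq> E" using edges unfolding A_def by auto
  show "A \<noteq> {}" using g3 unfolding A_def by (auto simp: lessThan_empty_iff)
  have inj: "inj_on (\<lambda>i. {vs!i, vs!((i+1) mod g)}) {..<g}"
  proof (rule inj_onI)
    fix i j assume i: "i \<in> {..<g}" and j: "j \<in> {..<g}"
      and eq: "{vs!i, vs!((i+1) mod g)} = {vs!j, vs!((j+1) mod g)}"
    have gp: "0 < g" using g3 by simp
    have im: "(i+1) mod g < g" "(j+1) mod g < g" using gp by auto
    have D: "\<And>a b. a < g \<Longrightarrow> b < g \<Longrightarrow> vs!a = vs!b \<longleftrightarrow> a = b"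
      using dist g_def nth_eq_iff_index_eq by metis
    from eq have "vs!i = vs!j \<or> (vs!i = vs!((j+1) mod g) \<and> vs!((i+1) mod g) = vs!j)"
      by (auto simp: doubleton_eq_iff)
    then have "i = j \<or> (i = (j+1) mod g \<and> (i+1) mod g = j)"
      using D i j im by auto
    then show "i = j"
    proof
      assume h: "i = (j+1) mod g \<and> (i+1) mod g = j"
      show "i = j"
      proof (cases "j + 1 < g")
        case True
        then have "i = j + 1" using h by simp
        then show ?thesis
        proof (cases "j + 2 < g")
          case True
          then have "(i+1) mod g = j + 2" using \<open>i = j + 1\<close> by simp
          then show ?thesis using h \<open>i = j + 1\<close> by simp
        next
          case False
          then have "i + 1 = g" using \<open>i = j + 1\<close> i by simp
          then have "j = 0" using h by (metis mod_self)
          then show ?thesis using \<open>i + 1 = g\<close> \<open>i = j + 1\<close> g3 by simp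
        qed
      next
        case False
        then have "j + 1 = g" using j by simp
        then have "i = 0" using h by simp
        moreover have "Suc 0 mod g = Suc 0" using g3 by simp
        ultimately have "j = 1" using h by (metis One_nat_def add_0)
        then show ?thesis using g3 \<open>j + 1 = g\<close> by simp
      qed
    qed simp
  qed
  show "card A = g" unfolding A_def using inj by (simp add: card_image)
  define S where "S = set vs"
  have cS: "card S = g" unfolding S_def g_def using dist distinct_card by blast
  have adjS: "\<And>x y. adj A x y \<Longrightarrow> x \<in> S \<and> y \<in> S"
  proof -
    fix x y assume "adj A x y"
    then obtain i where "i < g" "{x,y} = {vs!i, vs!((i+1) mod g)}"
      unfolding adj_def A_def by auto
    moreover have "(i+1) mod g < g" using g3 by simp
    ultimately show "x \<in> S \<and> y \<in> S" unfolding S_def g_def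
      by (metis doubleton_eq_iff nth_mem)
  qed
  have fwd: "\<And>i. i < g \<Longrightarrow> (adj A)\<^sup>*\<^sup>* (vs!0) (vs!i)"
  proof -
    fix i show "i < g \<Longrightarrow> (adj A)\<^sup>*\<^sup>* (vs!0) (vs!i)"
    proof (induction i)
      case 0 then show ?case by simp
    next
      case (Suc k)
      have "{vs!k, vs!((k+1) mod g)} \<in> A" unfolding A_def using Suc.prems by auto
      then have "adj A (vs!k) (vs!(Suc k))" using Suc.prems by (simp add: adj_def)
      then show ?case using Suc by (meson Suc_lessD rtranclp.rtrancl_into_rtrancl)
    qed
  qed
  have allreach: "\<And>x y. x \<in> S \<Longrightarrow> y \<in> S \<Longrightarrow> (adj A)\<^sup>*\<^sup>* x y"
  proof -
    fix x y assume "x \<in> S" "y \<in> S"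
    then obtain i j where "i < g" "j < g" "x = vs!i" "y = vs!j"
      unfolding S_def g_def by (metis in_set_conv_nth)
    then show "(adj A)\<^sup>*\<^sup>* x y" using fwd reach_sym
      by (meson rtranclp_trans)
  qed
  define C where "C = (\<lambda>x. {y \<in> V. (adj A)\<^sup>*\<^sup>* x y})"
  have CS: "\<And>x. x \<in> S \<Longrightarrow> C x = S"
    using allreach reach_in_S[OF adjS] SV unfolding C_def S_def by blast
  have CN: "\<And>x. x \<in> V \<Longrightarrow> x \<notin> S \<Longrightarrow> C x = {x}"
    using reach_in_S[OF adjS] unfolding C_def by auto
  have Sne: "S \<noteq> {}" using cS g3 by auto
  have comp: "components V A = insert S ((\<lambda>x. {x}) ` (V - S))"
  proof -
    have "components V A = C ` V" unfolding components_def C_def by auto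
    also have "V = S \<union> (V - S)" using SV S_def by auto
    then have "C ` V = C ` S \<union> C ` (V - S)" by (metis image_Un)
    also have "C ` S = {S}" using CS Sne by auto
    also have "C ` (V - S) = (\<lambda>x. {x}) ` (V - S)" using CN by auto
    finally show ?thesis by simp
  qed
  have "S \<notin> (\<lambda>x. {x}) ` (V - S)" using cS g3 by auto
  moreover have "finite (V - S)" using fin by simp
  ultimately have "num_components V A = 1 + card (V - S)"
    unfolding num_components_def comp by (simp add: card_image)
  moreover have "card (V - S) = card V - g"
    using cS SV fin S_def by (simp add: card_Diff_subset finite_subset)
  moreover have "g \<le> card V" using cS SV fin S_def card_mono by metis
  ultimately show "graph_rank V A = g - 1" unfolding graph_rank_def by simp
qed

theorem proposition3p8:
  fixes V :: "'a set" and E :: "'a set set"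
  assumes "simple_graph V E"
    and "uniformly_dense V E"
    and "has_cycle V E"
  shows "real (girth V E) \<ge> density V E / (density V E - 1)"
proof -
  have fin: "finite V" using assms(1) simple_graph_def by blast
  have ex: "\<exists>k vs. is_cycle V E vs \<and> length vs = k" using assms(3) has_cycle_def by blast
  obtain vs where cyc: "is_cycle V E vs" and len: "length vs = girth V E"
    using LeastI_ex[OF ex] unfolding girth_def by blast
  define g where "g = length vs"
  define A where "A = (\<lambda>i. {vs!i, vs!((i+1) mod g)}) ` {..<g}"
  note F = cycle_facts[OF fin cyc, folded g_def, folded A_def]
  have g3: "g \<ge> 3" using cyc g_def is_cycle_def by blast
  have "density V A = real g / real (g - 1)" using F by (simp add: density_def)
  moreover have "density V A \<le> density V E" using assms(2) F uniformly_dense_def by blast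
  ultimately have h: "real g / (real g - 1) \<le> density V E" using g3 by (simp add: of_nat_diff)
  define r where "r = density V E"
  have gpos: "real g - 1 > 0" using g3 by simp
  have "real g \<le> r * (real g - 1)" using h gpos unfolding r_def by (simp add: divide_le_eq)
  moreover have "r > 1" using h gpos g3 r_def
    by (smt (verit) divide_le_eq_1 of_nat_le_0_iff)
  ultimately have "r / (r - 1) \<le> real g" by (simp add: divide_le_eq algebra_simps)
  then show ?thesis using len g_def r_def by simp
qed

end
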